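(* Let $n\ge3$ and let $\mathcal{G}$ be the directed star graph on nodes $\{1,\dots,n\}$ with center $1$, whose edges are $(1,j)$ and $(j,1)$ for $j=2,\dots,n$ together with self-loops $(i,i)$ at every node. Let $\tau\in\mathbb{Z}$ with $2\le\tau\le 2n-3$. Then the matrix $P^*$ with $P^*(1,1)=0$, $P^*(1,j)=\frac1{n-1}$ for $j\ge2$, and $P^*(j,1)=1$, $P^*(j,l)=0$ for $j\ge2$, $l\ne1$, is an optimal solution of $\max_P\min_{i,j}\mathbb{P}(T_{ij}(P)\le\tau)$ over all Markov chain strategies $P$ conforming to $\mathcal{G}$, and the value of the game is $$\mathbb{V}=\begin{cases}1-\left(1-\frac1{n-1}\right)^{\frac{\tau-1}{2}}, & \tau \text{ odd},\\[2pt] 1-\left(1-\frac1{n-1}\right)^{\frac{\tau}{2}}, & \tau\text{ even}.\end{cases}$$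
   Context: A Markov chain strategy conforming to $\mathcal{G}=(V,\mathcal{E})$ is a row-stochastic nonnegative $P=(p_{ij})$ with $p_{ij}=0$ for $(i,j)\notin\mathcal{E}$. For the Markov chain $(X_k)$ with transition matrix $P$, $T_{ij}=\min\{k\ge1:X_k=j\}$ given $X_0=i$. The value of the game is $\mathbb{V}=\max_P\min_{i,j}\mathbb{P}(T_{ij}(P)\le\tau)$. *)

theory Defs
  imports Complex_Main
begin

text \<open>Nodes are 1..n; a transition matrix is a function nat => nat => real,
only its entries on {1..n} x {1..n} matter.\<close>

definition star_edges :: "nat \<Rightarrow> (nat \<times> nat) set" where
  "star_edges n = {(1, j) | j. 2 \<le> j \<and> j \<le> n} \<union> {(j, 1) | j. 2 \<le> j \<and> j \<le> n}
                  \<union> {(i, i) | i. 1 \<le> i \<and> i \<le> n}"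

definition conforms :: "nat \<Rightarrow> (nat \<times> nat) set \<Rightarrow> (nat \<Rightarrow> nat \<Rightarrow> real) \<Rightarrow> bool" where
  "conforms n E P \<longleftrightarrow>
     (\<forall>i\<in>{1..n}. \<forall>j\<in>{1..n}. P i j \<ge> 0) \<and>
     (\<forall>i\<in>{1..n}. (\<Sum>j\<in>{1..n}. P i j) = 1) \<and>
     (\<forall>i\<in>{1..n}. \<forall>j\<in>{1..n}. (i, j) \<notin> E \<longrightarrow> P i j = 0)"

text \<open>hit_prob n P k i j = Prob(T_ij <= k | X_0 = i), where T_ij = min{k >= 1. X_k = j},
  via the first-step decomposition of the first-passage event.\<close>
fun hit_prob :: "nat \<Rightarrow> (nat \<Rightarrow> nat \<Rightarrow> real) \<Rightarrow> nat \<Rightarrow> nat \<Rightarrow> nat \<Rightarrow> real" where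
  "hit_prob n P 0 i j = 0"
| "hit_prob n P (Suc k) i j =
     (\<Sum>l\<in>{1..n}. P i l * (if l = j then 1 else hit_prob n P k l j))"

definition min_hit :: "nat \<Rightarrow> (nat \<Rightarrow> nat \<Rightarrow> real) \<Rightarrow> nat \<Rightarrow> real" where
  "min_hit n P \<tau> = Min {hit_prob n P \<tau> i j | i j. i \<in> {1..n} \<and> j \<in> {1..n}}"

definition game_value :: "nat \<Rightarrow> (nat \<times> nat) set \<Rightarrow> nat \<Rightarrow> real" where
  "game_value n E \<tau> = (SUP P\<in>{P. conforms n E P}. min_hit n P \<tau>)"

definition P_star :: "nat \<Rightarrow> nat \<Rightarrow> nat \<Rightarrow> real" where
  "P_star n i j = (if i = 1 then (if j = 1 then 0 else 1 / (real n - 1))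
                   else (if j = 1 then 1 else 0))"

end

theory Submission
  imports Defs
begin

lemma sum_two_nonzero:
  assumes "finite A" "a \<in> A" "b \<in> A" "a \<noteq> b" "\<forall>x\<in>A. x \<noteq> a \<and> x \<noteq> b \<longrightarrow> f x = 0"
  shows "sum f A = f a + f b"
proof -
  have "sum f A = f a + sum f (A - {a})" using assms by (simp add: sum.remove)
  also have "sum f (A - {a}) = f b + sum f (A - {a} - {b})"
    using assms by (subst sum.remove[of _ b]) auto
  also have "sum f (A - {a} - {b}) = 0" using assms by (intro sum.neutral) auto
  finally show ?thesis by simp
qed

lemma hit_bounds:
  assumes "conforms n E P" "i \<in> {1..n}"
  shows "0 \<le> hit_prob n P t i j \<and> hit_prob n P t i j \<le> 1"
  using assms(2)
proof (induction t arbitrary: i)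
  case 0
  then show ?case by simp
next
  case (Suc t)
  have nn: "\<forall>l\<in>{1..n}. 0 \<le> P i l" and rs: "(\<Sum>l\<in>{1..n}. P i l) = 1"
    using assms(1) Suc.prems unfolding conforms_def by auto
  have "0 \<le> (\<Sum>l\<in>{1..n}. P i l * (if l = j then 1 else hit_prob n P t l j))"
    using nn Suc.IH by (intro sum_nonneg) auto
  moreover have "(\<Sum>l\<in>{1..n}. P i l * (if l = j then 1 else hit_prob n P t l j)) \<le> (\<Sum>l\<in>{1..n}. P i l)"
    using nn Suc.IH by (intro sum_mono) (auto intro: mult_left_le)
  ultimately show ?case using rs by simp
qed

lemma hit_mono:
  assumes "conforms n E P" "i \<in> {1..n}"
  shows "hit_prob n P t i j \<le> hit_prob n P (Suc t) i j"
  using assms(2)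
proof (induction t arbitrary: i)
  case 0
  then show ?case using hit_bounds[OF assms(1), of i "Suc 0" j] by simp
next
  case (Suc t)
  have nn: "\<forall>l\<in>{1..n}. 0 \<le> P i l"
    using assms(1) Suc.prems unfolding conforms_def by auto
  show ?case
    unfolding hit_prob.simps
    using nn Suc.IH by (intro sum_mono) (auto intro: mult_left_mono)
qed

lemma leaf_zero:
  assumes "conforms n (star_edges n) P" "l \<in> {2..n}" "x \<in> {1..n}" "x \<noteq> 1" "x \<noteq> l"
  shows "P l x = 0"
proof -
  have "(l, x) \<notin> star_edges n" using assms(2-5) unfolding star_edges_def by auto
  then show ?thesis using assms unfolding conforms_def by auto
qed

lemma leaf_rowsum:
  assumes "conforms n (star_edges n) P" "l \<in> {2..n}"
  shows "P l 1 + P l l = 1"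
proof -
  have "(\<Sum>x\<in>{1..n}. P l x) = 1" using assms unfolding conforms_def by auto
  moreover have "(\<Sum>x\<in>{1..n}. P l x) = P l 1 + P l l"
    using assms leaf_zero[OF assms(1) assms(2)] by (intro sum_two_nonzero) auto
  ultimately show ?thesis by simp
qed

lemma leaf_step:
  assumes "conforms n (star_edges n) P" "l \<in> {2..n}" "j \<in> {2..n}" "j \<noteq> l"
  shows "hit_prob n P (Suc m) l j = P l 1 * hit_prob n P m 1 j + P l l * hit_prob n P m l j"
proof -
  have "hit_prob n P (Suc m) l j = (\<Sum>x\<in>{1..n}. P l x * (if x = j then 1 else hit_prob n P m x j))"
    by simp
  also have "\<dots> = P l 1 * (if 1 = j then 1 else hit_prob n P m 1 j) + P l l * (if l = j then 1 else hit_prob n P m l j)"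
    using assms leaf_zero[OF assms(1) assms(2)] by (intro sum_two_nonzero) auto
  finally show ?thesis using assms by auto
qed

lemma leaf_le_hub:
  assumes "conforms n (star_edges n) P" "l \<in> {2..n}" "j \<in> {2..n}" "j \<noteq> l"
  shows "hit_prob n P (Suc t) l j \<le> hit_prob n P t 1 j"
proof (induction t)
  case 0
  then show ?case using leaf_step[OF assms, of 0] by simp
next
  case (Suc t)
  have nn: "0 \<le> P l 1" "0 \<le> P l l" using assms unfolding conforms_def by auto
  have n1: "1 \<in> {1..n}" using assms by auto
  have "hit_prob n P (Suc (Suc t)) l j = P l 1 * hit_prob n P (Suc t) 1 j + P l l * hit_prob n P (Suc t) l j"
    using leaf_step[OF assms] by simp
  also have "\<dots> \<le> P l 1 * hit_prob n P (Suc t) 1 j + P l l * hit_prob n P (Suc t) 1 j"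
    using Suc hit_mono[OF assms(1) n1, of t j] nn by (intro add_left_mono mult_left_mono) auto
  also have "\<dots> = hit_prob n P (Suc t) 1 j" using leaf_rowsum[OF assms(1,2)] by algebra
  finally show ?case .
qed

lemma split_hub_sum:
  fixes j n :: nat
  assumes "j \<in> {2..n}"
  shows "(\<Sum>x\<in>{1..n}. f x) = f 1 + f j + (\<Sum>x\<in>{2..n} - {j}. f x)"
proof -
  have "(\<Sum>x\<in>{1..n}. f x) = f 1 + (\<Sum>x\<in>{1..n} - {1}. f x)"
    using assms by (subst sum.remove[of _ 1]) auto
  also have "{1..n} - {1} = {2..n}" by auto
  also have "(\<Sum>x\<in>{2..n}. f x) = f j + (\<Sum>x\<in>{2..n} - {j}. f x)"
    using assms by (subst sum.remove[of _ j]) auto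
  finally show ?thesis by (simp add: add.assoc)
qed

lemma general_bound:
  assumes conf: "conforms n (star_edges n) P" and n3: "n \<ge> 3" and j: "j \<in> {2..n}"
    and pj: "real (n - 1) * P 1 j \<le> 1 - P 1 1"
  shows "hit_prob n P t 1 j \<le> 1 - (1 - 1 / (real n - 1)) ^ (Suc t div 2)"
proof (induction t rule: nat_less_induct)
  case (1 t)
  define r where "r = 1 - 1 / (real n - 1)"
  define a where "a = P 1 1"
  define p where "p = P 1 j"
  have n1: "1 \<in> {1..n}" using n3 by auto
  have rs: "(\<Sum>x\<in>{1..n}. P 1 x) = 1" and nn: "\<forall>x\<in>{1..n}. 0 \<le> P 1 x"
    using conf n1 unfolding conforms_def by auto
  have rest: "(\<Sum>x\<in>{2..n} - {j}. P 1 x) = 1 - a - p"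
    using rs split_hub_sum[OF j, of "P 1"] unfolding a_def p_def by simp
  have restnn: "0 \<le> 1 - a - p" using rest[symmetric] nn by (auto intro!: sum_nonneg)
  have rn: "real (n - 1) = real n - 1" using n3 by auto
  have pq: "p \<le> (1 - a) * (1 - r)" using pj n3 unfolding p_def a_def r_def rn
    by (auto simp: field_simps)
  have r01: "0 \<le> r" "r \<le> 1" using n3 unfolding r_def by (auto simp: field_simps)
  show ?case
  proof (cases t)
    case 0
    then show ?thesis by simp
  next
    case (Suc t')
    show ?thesis
    proof (cases t')
      case 0
      have "hit_prob n P 1 1 j = p"
        unfolding p_def using split_hub_sum[OF j, of "\<lambda>x. P 1 x * (if x = j then 1 else hit_prob n P 0 x j)"] j
        by simp
      moreover have "0 \<le> a" using nn n1 unfolding a_def by auto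
      moreover have "(1 - a) * (1 - r) \<le> 1 - r" using \<open>0 \<le> a\<close> r01
        by (simp add: algebra_simps mult_left_le)
      ultimately show ?thesis using Suc 0 pq unfolding r_def[symmetric] p_def a_def
        by simp
    next
      case (Suc s)
      have tt: "t = Suc (Suc s)" using \<open>t = Suc t'\<close> Suc by simp
      define g0 where "g0 = hit_prob n P s 1 j"
      define g1 where "g1 = hit_prob n P (Suc s) 1 j"
      define R0 where "R0 = r ^ (Suc s div 2)"
      define R1 where "R1 = r ^ (Suc (Suc s) div 2)"
      have IH0: "g0 \<le> 1 - R0" using "1" tt unfolding g0_def R0_def r_def by auto
      have IH1: "g1 \<le> 1 - R1" using "1" tt unfolding g1_def R1_def r_def by auto
      have R1ge: "r * R0 \<le> R1"
      proof -
        have "r * R0 = r ^ Suc (Suc s div 2)" unfolding R0_def by simp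
        also have "\<dots> \<le> R1" unfolding R1_def using r01
          by (intro power_decreasing) auto
        finally show ?thesis .
      qed
      have goal_exp: "r ^ (Suc t div 2) = r * R0" unfolding R0_def tt by simp
      have "hit_prob n P t 1 j = (\<Sum>x\<in>{1..n}. P 1 x * (if x = j then 1 else hit_prob n P (Suc s) x j))"
        using tt by simp
      also have "\<dots> = a * g1 + p + (\<Sum>x\<in>{2..n} - {j}. P 1 x * hit_prob n P (Suc s) x j)"
        using split_hub_sum[OF j, of "\<lambda>x. P 1 x * (if x = j then 1 else hit_prob n P (Suc s) x j)"] j
        unfolding a_def p_def g1_def by (simp del: hit_prob.simps)
      also have "(\<Sum>x\<in>{2..n} - {j}. P 1 x * hit_prob n P (Suc s) x j) \<le> (\<Sum>x\<in>{2..n} - {j}. P 1 x * g0)"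
        unfolding g0_def using nn leaf_le_hub[OF conf _ j] by (intro sum_mono mult_left_mono) auto
      also have "\<dots> = (1 - a - p) * g0" using rest by (simp add: sum_distrib_right[symmetric])
      finally have "hit_prob n P t 1 j \<le> a * g1 + p + (1 - a - p) * g0" by simp
      also have "\<dots> \<le> a * (1 - R1) + p + (1 - a - p) * (1 - R0)"
        using IH0 IH1 restnn nn n1 unfolding a_def
        by (intro add_mono mult_left_mono) auto
      also have "\<dots> = 1 - a * R1 - (1 - a - p) * R0" by algebra
      also have "\<dots> \<le> 1 - r * R0"
      proof -
        have a0: "0 \<le> a" using nn n1 unfolding a_def by auto
        have R0nn: "0 \<le> R0" unfolding R0_def using r01 by simp
        have "a * (r * R0) \<le> a * R1" using R1ge a0 by (rule mult_left_mono)
        moreover have "(1 - a) * r * R0 \<le> (1 - a - p) * R0"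
          using pq R0nn by (intro mult_right_mono) (auto simp: algebra_simps)
        ultimately show ?thesis by (simp add: algebra_simps)
      qed
      finally show ?thesis unfolding r_def[symmetric] goal_exp .
    qed
  qed
qed


lemma sum_single:
  assumes "finite A" "a \<in> A" "\<forall>x\<in>A. x \<noteq> a \<longrightarrow> f x = 0"
  shows "sum f A = f a"
proof -
  have "sum f A = f a + sum f (A - {a})" using assms by (simp add: sum.remove)
  also have "sum f (A - {a}) = 0" using assms by (intro sum.neutral) auto
  finally show ?thesis by simp
qed

lemma pstar_conf:
  assumes "n \<ge> 3"
  shows "conforms n (star_edges n) (P_star n)"
proof -
  have q: "0 \<le> 1 / (real n - 1)" using assms by auto
  have rows: "(\<Sum>x\<in>{1..n}. P_star n i x) = 1" if "i \<in> {1..n}" for i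
  proof (cases "i = 1")
    case True
    have "(\<Sum>x\<in>{1..n}. P_star n i x) = P_star n i 1 + (\<Sum>x\<in>{1..n} - {1}. P_star n i x)"
      using assms by (subst sum.remove[of _ 1]) auto
    also have "(\<Sum>x\<in>{1..n} - {1}. P_star n i x) = (\<Sum>x\<in>{1..n} - {1}. 1 / (real n - 1))"
      using True by (intro sum.cong) (auto simp: P_star_def)
    also have "\<dots> = real (n - 1) * (1 / (real n - 1))" using assms by simp
    also have "\<dots> = 1" using assms by (simp add: of_nat_diff)
    finally show ?thesis using True by (simp add: P_star_def)
  next
    case False
    have "(\<Sum>x\<in>{1..n}. P_star n i x) = P_star n i 1"
      using assms False by (intro sum_single) (auto simp: P_star_def)
    then show ?thesis using False by (simp add: P_star_def)
  qed
  have edges: "P_star n i j = 0" if "i \<in> {1..n}" "j \<in> {1..n}" "(i, j) \<notin> star_edges n" for i j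
    using that unfolding star_edges_def P_star_def by auto
  show ?thesis unfolding conforms_def using rows edges q by (auto simp: P_star_def)
qed

lemma pstar_leaf_to_hub:
  assumes "n \<ge> 3" "i \<in> {2..n}"
  shows "hit_prob n (P_star n) (Suc k) i 1 = 1"
proof -
  have "hit_prob n (P_star n) (Suc k) i 1 = (\<Sum>x\<in>{1..n}. P_star n i x * (if x = 1 then 1 else hit_prob n (P_star n) k x 1))"
    by (simp only: hit_prob.simps(2))
  also have "\<dots> = P_star n i 1 * 1"
    using assms by (subst sum_single[of _ 1]) (auto simp: P_star_def)
  finally have "hit_prob n (P_star n) (Suc k) i 1 = P_star n i 1 * 1" .
  then show ?thesis using assms by (simp add: P_star_def)
qed

lemma pstar_hub_hub:
  assumes "n \<ge> 3"
  shows "hit_prob n (P_star n) (Suc (Suc k)) 1 1 = 1"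
proof -
  have "hit_prob n (P_star n) (Suc (Suc k)) 1 1 =
     (\<Sum>x\<in>{1..n}. P_star n 1 x * (if x = 1 then 1 else hit_prob n (P_star n) (Suc k) x 1))"
    by (simp only: hit_prob.simps(2))
  also have "\<dots> = (\<Sum>x\<in>{1..n}. P_star n 1 x)"
    using pstar_leaf_to_hub[OF assms] by (intro sum.cong) auto
  also have "\<dots> = 1"
  proof -
    have n1: "1 \<in> {1..n}" using assms by auto
    then show ?thesis using pstar_conf[OF assms] unfolding conforms_def by blast
  qed
  finally show ?thesis .
qed

lemma pstar_lower:
  assumes n3: "n \<ge> 3" and j: "j \<in> {2..n}"
  shows "(\<forall>i\<in>{2..n}. 1 - (1 - 1 / (real n - 1)) ^ (t div 2) \<le> hit_prob n (P_star n) t i j)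
       \<and> 1 - (1 - 1 / (real n - 1)) ^ (Suc t div 2) \<le> hit_prob n (P_star n) t 1 j"
proof (induction t)
  case 0
  then show ?case by simp
next
  case (Suc k)
  define r where "r = 1 - 1 / (real n - 1)"
  have leaf: "hit_prob n (P_star n) (Suc k) i j = hit_prob n (P_star n) k 1 j" if "i \<in> {2..n}" for i
  proof -
    have "hit_prob n (P_star n) (Suc k) i j = (\<Sum>x\<in>{1..n}. P_star n i x * (if x = j then 1 else hit_prob n (P_star n) k x j))"
      by (simp only: hit_prob.simps(2))
    also have "\<dots> = P_star n i 1 * (if 1 = j then 1 else hit_prob n (P_star n) k 1 j)"
      using that n3 by (subst sum_single[of _ 1]) (auto simp: P_star_def)
    finally have "hit_prob n (P_star n) (Suc k) i j = P_star n i 1 * (if 1 = j then 1 else hit_prob n (P_star n) k 1 j)" .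
    then show ?thesis using that j by (simp add: P_star_def)
  qed
  have hub: "hit_prob n (P_star n) (Suc k) 1 j = 1 / (real n - 1) + (\<Sum>x\<in>{2..n} - {j}. 1 / (real n - 1) * hit_prob n (P_star n) k x j)"
  proof -
    have "hit_prob n (P_star n) (Suc k) 1 j = (\<Sum>x\<in>{1..n}. P_star n 1 x * (if x = j then 1 else hit_prob n (P_star n) k x j))"
      by (simp only: hit_prob.simps(2))
    also have "\<dots> = 0 + 1 / (real n - 1) + (\<Sum>x\<in>{2..n} - {j}. P_star n 1 x * (if x = j then 1 else hit_prob n (P_star n) k x j))"
      using split_hub_sum[OF j, of "\<lambda>x. P_star n 1 x * (if x = j then 1 else hit_prob n (P_star n) k x j)"] j
      by (simp add: P_star_def del: hit_prob.simps)
    also have "(\<Sum>x\<in>{2..n} - {j}. P_star n 1 x * (if x = j then 1 else hit_prob n (P_star n) k x j))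
       = (\<Sum>x\<in>{2..n} - {j}. 1 / (real n - 1) * hit_prob n (P_star n) k x j)"
      by (intro sum.cong) (auto simp: P_star_def)
    finally show ?thesis by simp
  qed
  have IHl: "\<forall>x\<in>{2..n} - {j}. 1 - r ^ (k div 2) \<le> hit_prob n (P_star n) k x j"
    using Suc.IH unfolding r_def by auto
  have qnn: "0 \<le> 1 / (real n - 1)" using n3 by auto
  have "(\<Sum>x\<in>{2..n} - {j}. 1 / (real n - 1) * (1 - r ^ (k div 2))) \<le> (\<Sum>x\<in>{2..n} - {j}. 1 / (real n - 1) * hit_prob n (P_star n) k x j)"
    using IHl qnn by (intro sum_mono mult_left_mono) auto
  moreover have "(\<Sum>x\<in>{2..n} - {j}. 1 / (real n - 1) * (1 - r ^ (k div 2))) = r * (1 - r ^ (k div 2))"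
  proof -
    have "card ({2..n} - {j}) = n - 2" using j by auto
    moreover have "real (n - 2) * (1 / (real n - 1)) = r" using n3 unfolding r_def
      by (simp add: of_nat_diff field_simps)
    ultimately show ?thesis by (simp only: sum_constant) (metis times_divide_eq_right mult.commute mult.left_commute mult_1_right)
  qed
  ultimately have "1 / (real n - 1) + r * (1 - r ^ (k div 2)) \<le> hit_prob n (P_star n) (Suc k) 1 j"
    unfolding hub by linarith
  moreover have "1 / (real n - 1) + r * (1 - r ^ (k div 2)) = 1 - r ^ (Suc (Suc k) div 2)"
    unfolding r_def by (simp add: algebra_simps)
  ultimately show ?case using leaf Suc.IH unfolding r_def by auto
qed


lemma min_hit_set_eq:
  "{hit_prob n P \<tau> i j | i j. i \<in> {1..n} \<and> j \<in> {1..n}} = (\<lambda>(i, j). hit_prob n P \<tau> i j) ` ({1..n} \<times> {1..n})"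
proof (intro set_eqI iffI)
  fix x assume "x \<in> {hit_prob n P \<tau> i j | i j. i \<in> {1..n} \<and> j \<in> {1..n}}"
  then obtain i j where "x = hit_prob n P \<tau> i j" "i \<in> {1..n}" "j \<in> {1..n}" by blast
  then show "x \<in> (\<lambda>(i, j). hit_prob n P \<tau> i j) ` ({1..n} \<times> {1..n})"
    by (intro image_eqI[of _ _ "(i, j)"]) auto
next
  fix x assume "x \<in> (\<lambda>(i, j). hit_prob n P \<tau> i j) ` ({1..n} \<times> {1..n})"
  then obtain a b where ab: "x = hit_prob n P \<tau> a b" "a \<in> {1..n}" "b \<in> {1..n}" by auto
  show "x \<in> {hit_prob n P \<tau> i j | i j. i \<in> {1..n} \<and> j \<in> {1..n}}"
    apply (rule CollectI) apply (rule exI[of _ a]) apply (rule exI[of _ b]) using ab by simp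
qed

lemma min_hit_le:
  assumes "i \<in> {1..n}" "j \<in> {1..n}"
  shows "min_hit n P \<tau> \<le> hit_prob n P \<tau> i j"
  unfolding min_hit_def min_hit_set_eq using assms
  by (intro Min_le) auto

lemma min_hit_ge:
  assumes "n \<ge> 1" "\<And>i j. i \<in> {1..n} \<Longrightarrow> j \<in> {1..n} \<Longrightarrow> x \<le> hit_prob n P \<tau> i j"
  shows "x \<le> min_hit n P \<tau>"
  unfolding min_hit_def min_hit_set_eq using assms
  by (subst Min_ge_iff) auto

lemma upper:
  assumes conf: "conforms n (star_edges n) P" and n3: "n \<ge> 3" and t: "\<tau> \<ge> 1"
  shows "min_hit n P \<tau> \<le> 1 - (1 - 1 / (real n - 1)) ^ (\<tau> div 2)"
proof -
  define S where "S = {2..n}"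
  have fS: "finite S" "S \<noteq> {}" using n3 unfolding S_def by auto
  have "Min (P 1 ` S) \<in> P 1 ` S" using fS by (intro Min_in) auto
  then obtain j where j: "j \<in> S" "P 1 j = Min (P 1 ` S)" by auto
  have jmin: "P 1 j \<le> P 1 l" if "l \<in> S" for l using j that fS by simp
  have "real (n - 1) * P 1 j = (\<Sum>l\<in>S. P 1 j)" unfolding S_def by simp
  also have "\<dots> \<le> (\<Sum>l\<in>S. P 1 l)" using jmin by (intro sum_mono) auto
  also have "\<dots> = 1 - P 1 1"
  proof -
    have "(\<Sum>x\<in>{1..n}. P 1 x) = 1" using conf n3 unfolding conforms_def by auto
    moreover have "(\<Sum>x\<in>{1..n}. P 1 x) = P 1 1 + (\<Sum>x\<in>{1..n} - {1}. P 1 x)"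
      using n3 by (subst sum.remove[of _ 1]) auto
    moreover have "{1..n} - {1} = S" unfolding S_def by auto
    ultimately show ?thesis by simp
  qed
  finally have pj: "real (n - 1) * P 1 j \<le> 1 - P 1 1" .
  define k where "k = (if j = 2 then 3 else (2::nat))"
  have k: "k \<in> {2..n}" "k \<noteq> j" using n3 unfolding k_def by auto
  have jS: "j \<in> {2..n}" using j unfolding S_def by simp
  have tt: "\<tau> = Suc (\<tau> - 1)" using t by simp
  have "min_hit n P \<tau> \<le> hit_prob n P \<tau> k j" using k jS by (intro min_hit_le) auto
  also have "\<dots> \<le> hit_prob n P (\<tau> - 1) 1 j"
    using leaf_le_hub[OF conf k(1) jS, of "\<tau> - 1"] k tt by auto
  also have "\<dots> \<le> 1 - (1 - 1 / (real n - 1)) ^ (Suc (\<tau> - 1) div 2)"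
    by (rule general_bound[OF conf n3 jS pj])
  finally show ?thesis using tt by simp
qed

lemma lower:
  assumes n3: "n \<ge> 3" and t: "\<tau> \<ge> 2"
  shows "1 - (1 - 1 / (real n - 1)) ^ (\<tau> div 2) \<le> min_hit n (P_star n) \<tau>"
proof -
  have "1 - (1 - 1 / (real n - 1)) ^ (\<tau> div 2) \<le> hit_prob n (P_star n) \<tau> i j"
    if i: "i \<in> {1..n}" and j: "j \<in> {1..n}" for i j
  proof -
  define r where "r = 1 - 1 / (real n - 1)"
  have r01: "0 \<le> r" "r \<le> 1" using n3 unfolding r_def by (auto simp: field_simps)
  have le1: "1 - r ^ m \<le> 1" for m using r01 by simp
  obtain k where kk: "\<tau> = Suc (Suc k)" using t by (metis add_2_eq_Suc le_Suc_ex)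
  show "1 - (1 - 1 / (real n - 1)) ^ (\<tau> div 2) \<le> hit_prob n (P_star n) \<tau> i j"
  proof (cases "j = 1")
    case True
    show ?thesis
    proof (cases "i = 1")
      case True
      have h: "hit_prob n (P_star n) \<tau> i j = 1"
        using \<open>j = 1\<close> True pstar_hub_hub[OF n3, of k] kk by (simp del: hit_prob.simps)
      show ?thesis unfolding h using r01 unfolding r_def by simp
    next
      case False
      then have "i \<in> {2..n}" using i by auto
      have h: "hit_prob n (P_star n) \<tau> i j = 1"
        using \<open>j = 1\<close> \<open>i \<in> {2..n}\<close> pstar_leaf_to_hub[OF n3, of i "Suc k"] kk by (simp del: hit_prob.simps)
      show ?thesis unfolding h using r01 unfolding r_def by simp
    qed
  next
    case False
    then have j2: "j \<in> {2..n}" using j by auto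
    note L = pstar_lower[OF n3 j2, of \<tau>, folded r_def]
    show ?thesis
    proof (cases "i = 1")
      case True
      have a: "r ^ (Suc \<tau> div 2) \<le> r ^ (\<tau> div 2)" using r01 by (intro power_decreasing) auto
      have b: "1 - r ^ (Suc \<tau> div 2) \<le> hit_prob n (P_star n) \<tau> 1 j" using L by blast
      have "1 - r ^ (\<tau> div 2) \<le> hit_prob n (P_star n) \<tau> 1 j" using a b by linarith
      then show ?thesis using True unfolding r_def by simp
    next
      case False
      then have "i \<in> {2..n}" using i by auto
      then show ?thesis using L unfolding r_def by auto
    qed
  qed
qed
  then show ?thesis using n3 by (intro min_hit_ge) auto
qed

theorem theorem2:
  fixes n \<tau> :: nat
  assumes "n \<ge> 3" and "2 \<le> \<tau>" and "\<tau> \<le> 2 * n - 3"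
  shows "conforms n (star_edges n) (P_star n)
    \<and> (\<forall>P. conforms n (star_edges n) P \<longrightarrow> min_hit n P \<tau> \<le> min_hit n (P_star n) \<tau>)
    \<and> game_value n (star_edges n) \<tau> = min_hit n (P_star n) \<tau>
    \<and> game_value n (star_edges n) \<tau> =
        (if odd \<tau> then 1 - (1 - 1 / (real n - 1)) ^ ((\<tau> - 1) div 2)
         else 1 - (1 - 1 / (real n - 1)) ^ (\<tau> div 2))"
proof -
  define V where "V = 1 - (1 - 1 / (real n - 1)) ^ (\<tau> div 2)"
  have C: "conforms n (star_edges n) (P_star n)" using pstar_conf assms(1) .
  have lo: "V \<le> min_hit n (P_star n) \<tau>" unfolding V_def using lower assms by auto
  have up: "min_hit n P \<tau> \<le> V" if "conforms n (star_edges n) P" for P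
    unfolding V_def using upper[OF that assms(1)] assms by auto
  have eq: "min_hit n (P_star n) \<tau> = V" using lo up[OF C] by linarith
  have opt: "\<forall>P. conforms n (star_edges n) P \<longrightarrow> min_hit n P \<tau> \<le> min_hit n (P_star n) \<tau>"
    using up eq by auto
  have gv: "game_value n (star_edges n) \<tau> = min_hit n (P_star n) \<tau>"
    unfolding game_value_def using C opt by (intro cSup_eq_maximum) auto
  have "(\<tau> - 1) div 2 = \<tau> div 2" if "odd \<tau>" using that by (elim oddE) auto
  then have form: "(if odd \<tau> then 1 - (1 - 1 / (real n - 1)) ^ ((\<tau> - 1) div 2)
         else 1 - (1 - 1 / (real n - 1)) ^ (\<tau> div 2)) = V" unfolding V_def by auto
  show ?thesis using C opt gv eq form by simp
qed

end
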